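(* Let $f$ be a loopless $(k,n)$-bounded affine permutation and let $f^\downarrow(p)=f(p-1)$ ($p\in\mathbb Z$), a $(k-1,n)$-bounded affine permutation. Then: (i) the reduced strand diagram of $f$ is connected (i.e. $G^\times_f$ is connected) if and only if both $G^H_f$ and $G^H_{f^\downarrow}$ are connected; (ii) the partition of $[n]$ into connected components of $G^\times_f$ is the common refinement of the partitions into connected components of $G^H_f$ and of $G^H_{f^\downarrow}$; i.e. $p,q\in[n]$ lie in the same component of $G^\times_f$ iff they lie in the same component of $G^H_f$ and in the same component of $G^H_{f^\downarrow}$.
   Context: A $(k,n)$-bounded affine permutation is a bijection $f:\mathbb Z\to\mathbb Z$ with $f(j+n)=f(j)+n$, $j\le f(j)\le j+n$, $\sum_{j=1}^n(f(j)-j)=kn$; loopless if $f(p)>p$ for all $p$; $\bar f\in S_n$ is given by $\bar f(p)\equiv f(p)\pmod n$. Place $b_1,\dots,b_n$ clockwise on a circle, with $p^-$ just before and $p^+$ just after $b_p$. For loopless $f$, the reduced strand diagram consists of straight arrows $S_p:s^+\to p^-$, $p\in[n]$, $s=\bar f^{-1}(p)$; distinct $p,q$ form an $f$-crossing if $S_p,S_q$ intersect; $G^\times_f$ is the graph on $[n]$ with edges the $f$-crossing pairs. For any bounded affine permutation $g$, $G^H_g$ is the graph on $[n]$ with an edge $\{p,q\}$ ($p\ne q$) whenever the closed straight segments $[b_s,b_p]$ and $[b_t,b_q]$ intersect, where $\bar g(s)=p$, $\bar g(t)=q$ (a segment may degenerate to a point). *)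

theory Defs
  imports "HOL-Analysis.Analysis"
begin

abbreviation idx :: "nat \<Rightarrow> int set" where
  "idx n \<equiv> {1..int n}"

definition bounded_affine_perm :: "int \<Rightarrow> nat \<Rightarrow> (int \<Rightarrow> int) \<Rightarrow> bool" where
  "bounded_affine_perm k n f \<longleftrightarrow>
     bij f \<and> (\<forall>j. f (j + int n) = f j + int n) \<and> (\<forall>j. j \<le> f j \<and> f j \<le> j + int n) \<and>
     (\<Sum>j\<in>idx n. f j - j) = k * int n"

definition loopless :: "(int \<Rightarrow> int) \<Rightarrow> bool" where
  "loopless f \<longleftrightarrow> (\<forall>p. f p > p)"

definition fbar :: "nat \<Rightarrow> (int \<Rightarrow> int) \<Rightarrow> int \<Rightarrow> int" where
  "fbar n f p = (f p - 1) mod int n + 1"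

definition fdown :: "(int \<Rightarrow> int) \<Rightarrow> int \<Rightarrow> int" where
  "fdown f p = f (p - 1)"

text \<open>Points on the unit circle, placed clockwise: position $x$ has angle $-2\pi x/n$.
  $b_p$ is at position $p$, $p^-$ at $p - 1/4$ (just before), $p^+$ at $p + 1/4$ (just after).\<close>
definition circ_pt :: "nat \<Rightarrow> real \<Rightarrow> complex" where
  "circ_pt n x = cis (- 2 * pi * x / real n)"

definition bpt :: "nat \<Rightarrow> int \<Rightarrow> complex" where
  "bpt n p = circ_pt n (real_of_int p)"

definition bminus :: "nat \<Rightarrow> int \<Rightarrow> complex" where
  "bminus n p = circ_pt n (real_of_int p - 1/4)"

definition bplus :: "nat \<Rightarrow> int \<Rightarrow> complex" where
  "bplus n p = circ_pt n (real_of_int p + 1/4)"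

definition crossing_graph :: "nat \<Rightarrow> (int \<Rightarrow> int) \<Rightarrow> (int \<times> int) set" where
  "crossing_graph n f = {(p, q). p \<in> idx n \<and> q \<in> idx n \<and> p \<noteq> q \<and>
     (\<exists>s\<in>idx n. \<exists>t\<in>idx n. fbar n f s = p \<and> fbar n f t = q \<and>
        closed_segment (bplus n s) (bminus n p) \<inter> closed_segment (bplus n t) (bminus n q) \<noteq> {})}"

definition hook_graph :: "nat \<Rightarrow> (int \<Rightarrow> int) \<Rightarrow> (int \<times> int) set" where
  "hook_graph n g = {(p, q). p \<in> idx n \<and> q \<in> idx n \<and> p \<noteq> q \<and>
     (\<exists>s\<in>idx n. \<exists>t\<in>idx n. fbar n g s = p \<and> fbar n g t = q \<and>
        closed_segment (bpt n s) (bpt n p) \<inter> closed_segment (bpt n t) (bpt n q) \<noteq> {})}"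

definition graph_connected :: "nat \<Rightarrow> (int \<times> int) set \<Rightarrow> bool" where
  "graph_connected n E \<longleftrightarrow> (\<forall>p\<in>idx n. \<forall>q\<in>idx n. (p, q) \<in> E\<^sup>*)"

end

theory Submission
  imports Defs
begin

definition crs :: "complex \<Rightarrow> complex \<Rightarrow> complex \<Rightarrow> real" where
  "crs A B C = Im (cnj (B - A) * (C - A))"

lemma crs_expand: "crs A B C = (Re B - Re A)*(Im C - Im A) - (Im B - Im A)*(Re C - Re A)"
  by (simp add: crs_def algebra_simps)

lemma crs_seg_zero: assumes "z \<in> closed_segment A B" shows "crs A B z = 0"
proof -
  obtain u where u: "z = (1-u) *\<^sub>R A + u *\<^sub>R B" using assms by (auto simp: closed_segment_def)
  show ?thesis unfolding u crs_expand by (simp add: algebra_simps)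
qed

lemma crs_seg_comb: assumes "z \<in> closed_segment C D"
  shows "\<exists>u. 0 \<le> u \<and> u \<le> 1 \<and> crs A B z = (1-u) * crs A B C + u * crs A B D"
proof -
  obtain u where u: "0 \<le> u" "u \<le> 1" "z = (1-u) *\<^sub>R C + u *\<^sub>R D" using assms by (auto simp: closed_segment_def)
  have "crs A B z = (1-u) * crs A B C + u * crs A B D"
    unfolding u(3) crs_expand by (simp add: algebra_simps)
  thus ?thesis using u by blast
qed

lemma crs_seg_pos: assumes "z \<in> closed_segment C D" "crs A B C > 0" "crs A B D > 0" shows "crs A B z > 0"
proof -
  obtain u where u: "0 \<le> u" "u \<le> 1" "crs A B z = (1-u) * crs A B C + u * crs A B D"
    using crs_seg_comb[OF assms(1)] by blast
  show ?thesis unfolding u(3)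
  proof (cases "u = 0")
    case True thus "0 < (1-u) * crs A B C + u * crs A B D" using assms by simp
  next
    case False
    hence "u * crs A B D > 0" using u assms by simp
    moreover have "(1-u) * crs A B C \<ge> 0" using u assms by simp
    ultimately show "0 < (1-u) * crs A B C + u * crs A B D" by linarith
  qed
qed

lemma crs_seg_neg: assumes "z \<in> closed_segment C D" "crs A B C < 0" "crs A B D < 0" shows "crs A B z < 0"
proof -
  have "crs B A C > 0" "crs B A D > 0" using assms by (simp_all add: crs_expand algebra_simps)
  from crs_seg_pos[OF assms(1) this] show ?thesis by (simp add: crs_expand algebra_simps)
qed

lemma poly_id: fixes a1 a2 b1 b2 c1 c2 d1 d2 :: real
  assumes "fC = (b1-a1)*(c2-a2) - (b2-a2)*(c1-a1)" "fD = (b1-a1)*(d2-a2) - (b2-a2)*(d1-a1)"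
  "gA = (d1-c1)*(a2-c2) - (d2-c2)*(a1-c1)" "gB = (d1-c1)*(b2-c2) - (d2-c2)*(b1-c1)"
  shows "(gA-gB)*(fC-fD)*a1 + gA*(fC-fD)*(b1-a1) = (gA-gB)*(fC-fD)*c1 + fC*(gA-gB)*(d1-c1)"
   "(gA-gB)*(fC-fD)*a2 + gA*(fC-fD)*(b2-a2) = (gA-gB)*(fC-fD)*c2 + fC*(gA-gB)*(d2-c2)"
  unfolding assms by algebra+

lemma div_id: fixes Z Y a b c d gA fC :: real
  assumes "Z \<noteq> 0" "Y \<noteq> 0" "Z*Y*a + gA*Y*(b-a) = Z*Y*c + fC*Z*(d-c)"
  shows "a + gA/Z*(b-a) = c + fC/Y*(d-c)"
proof -
  have 1: "a + gA/Z*(b-a) = (Z*Y*a + gA*Y*(b-a))/(Z*Y)" using assms(1,2) by (simp add: field_simps)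
  have 2: "c + fC/Y*(d-c) = (Z*Y*c + fC*Z*(d-c))/(Z*Y)" using assms(1,2) by (simp add: field_simps)
  show ?thesis unfolding 1 2 assms(3) ..
qed

lemma frac01: fixes x y :: real assumes "x * y < 0" shows "0 \<le> x/(x-y) \<and> x/(x-y) \<le> 1"
proof -
  have "x>0 \<and> y<0 \<or> x<0 \<and> y>0" using assms by (simp add: mult_less_0_iff)
  thus ?thesis by (auto simp: zero_le_divide_iff divide_le_eq_1)
qed

lemma cramer:
  assumes "crs A B C * crs A B D < 0" "crs C D A * crs C D B < 0"
  shows "closed_segment A B \<inter> closed_segment C D \<noteq> {}"
proof -
  define fC where "fC = crs A B C"
  define fD where "fD = crs A B D"
  define gA where "gA = crs C D A"
  define gB where "gB = crs C D B"
  have nf: "gA - gB \<noteq> 0" using assms(2) unfolding gA_def gB_def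
    by (metis eq_iff_diff_eq_0 not_square_less_zero)
  have ng: "fC - fD \<noteq> 0" using assms(1) unfolding fC_def fD_def
    by (metis eq_iff_diff_eq_0 not_square_less_zero)
  define s where "s = gA / (gA - gB)"
  define t where "t = fC / (fC - fD)"
  have s01: "0 \<le> s \<and> s \<le> 1" using frac01 assms(2) unfolding s_def gA_def[symmetric] gB_def[symmetric] by blast
  have t01: "0 \<le> t \<and> t \<le> 1" using frac01 assms(1) unfolding t_def fC_def[symmetric] fD_def[symmetric] by blast
  note P = poly_id[OF fC_def[unfolded crs_expand] fD_def[unfolded crs_expand] gA_def[unfolded crs_expand] gB_def[unfolded crs_expand]]
  have e1: "Re A + s * (Re B - Re A) = Re C + t * (Re D - Re C)"
    unfolding s_def t_def by (rule div_id[OF nf ng P(1)])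
  have e2: "Im A + s * (Im B - Im A) = Im C + t * (Im D - Im C)"
    unfolding s_def t_def by (rule div_id[OF nf ng P(2)])
  have eq: "(1 - s) *\<^sub>R A + s *\<^sub>R B = (1 - t) *\<^sub>R C + t *\<^sub>R D"
  proof -
    have r: "Re ((1 - s) *\<^sub>R A + s *\<^sub>R B) = Re A + s * (Re B - Re A)"
      "Im ((1 - s) *\<^sub>R A + s *\<^sub>R B) = Im A + s * (Im B - Im A)"
      "Re ((1 - t) *\<^sub>R C + t *\<^sub>R D) = Re C + t * (Re D - Re C)"
      "Im ((1 - t) *\<^sub>R C + t *\<^sub>R D) = Im C + t * (Im D - Im C)"
      by (simp_all add: algebra_simps)
    show ?thesis using e1 e2 r by (simp add: complex_eq_iff)
  qed
  have "(1 - s) *\<^sub>R A + s *\<^sub>R B \<in> closed_segment A B" using s01 by (auto simp: closed_segment_def)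
  moreover have "(1 - s) *\<^sub>R A + s *\<^sub>R B \<in> closed_segment C D" unfolding eq using t01 by (auto simp: closed_segment_def)
  ultimately show ?thesis by blast
qed


lemma trig3: fixes x y :: real
  shows "sin (2*x) + sin (2*y) - sin (2*x+2*y) = 4 * sin x * sin y * sin (x+y)"
proof -
  have e: "sin (2*x+2*y) = sin (2*x) * cos (2*y) + cos (2*x) * sin(2*y)" by (rule sin_add)
  show ?thesis unfolding e sin_double cos_double sin_add
    using sin_cos_squared_add[of x] sin_cos_squared_add[of y] by algebra
qed

lemma cross_cis: fixes a b c :: real
  shows "Im (cnj (cis (2*b) - cis (2*a)) * (cis (2*c) - cis (2*a))) = 4 * sin (c-b) * sin (b-a) * sin (c-a)"
proof -
  have "Im (cnj (cis (2*b) - cis (2*a)) * (cis (2*c) - cis (2*a))) = sin (2*(c-b)) + sin (2*(b-a)) - sin (2*(c-b)+2*(b-a))"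
    by (simp add: sin_diff algebra_simps)
  also have "... = 4 * sin (c-b) * sin (b-a) * sin (c-b+(b-a))" by (rule trig3)
  finally show ?thesis by simp
qed

lemma crs_circ: "crs (circ_pt n a) (circ_pt n b) (circ_pt n c) =
   4 * sin (pi*(b-c)/n) * sin (pi*(a-b)/n) * sin (pi*(a-c)/n)"
proof -
  have e: "circ_pt n x = cis (2 * (- pi * x / n))" for x unfolding circ_pt_def by (simp add: algebra_simps)
  show ?thesis unfolding e crs_def cross_cis by (simp add: algebra_simps diff_divide_distrib)
qed

lemma sin_sign: assumes "n > 0" "0 < d" "d < real n" shows "sin (pi*d/n) > 0"
proof (rule sin_gt_zero)
  show "0 < pi*d/n" using assms by simp
  have "d / n < 1" using assms by simp
  hence "pi * (d/n) < pi * 1" by (intro mult_strict_left_mono) auto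
  thus "pi*d/n < pi" by simp
qed

lemma sin_sign_neg: assumes "n > 0" "d < 0" "-d < real n" shows "sin (pi*d/n) < 0"
proof -
  have "sin (pi*(-d)/n) > 0" by (rule sin_sign[OF assms(1)]) (use assms in auto)
  moreover have "pi*(-d)/n = -(pi*d/n)" by simp
  ultimately show ?thesis by (metis neg_0_less_iff_less sin_minus)
qed

definition ilv :: "'a::linorder \<Rightarrow> 'a \<Rightarrow> 'a \<Rightarrow> 'a \<Rightarrow> bool" where
  "ilv x1 x2 y1 y2 \<longleftrightarrow>
     \<not> (min x1 x2 < y1 \<and> y1 < max x1 x2 \<and> min x1 x2 < y2 \<and> y2 < max x1 x2) \<and>
     \<not> ((y1 < min x1 x2 \<or> max x1 x2 < y1) \<and> (y2 < min x1 x2 \<or> max x1 x2 < y2))"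

lemma circ_sign:
  assumes n: "n > 0" and W: "a \<in> {w..<w+real n}" "b \<in> {w..<w+real n}" "c \<in> {w..<w+real n}" and ab: "a < b"
  shows "(a < c \<and> c < b) \<Longrightarrow> crs (circ_pt n a) (circ_pt n b) (circ_pt n c) > 0"
    and "(c < a \<or> b < c) \<Longrightarrow> crs (circ_pt n a) (circ_pt n b) (circ_pt n c) < 0"
proof -
  have s2: "sin (pi*(a-b)/n) < 0" using sin_sign_neg[OF n, of "a-b"] W ab by auto
  { assume "a < c \<and> c < b"
    hence "sin (pi*(b-c)/n) > 0" "sin (pi*(a-c)/n) < 0"
      using sin_sign[OF n, of "b-c"] sin_sign_neg[OF n, of "a-c"] W by auto
    thus "crs (circ_pt n a) (circ_pt n b) (circ_pt n c) > 0" unfolding crs_circ using s2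
      by (simp add: mult_less_0_iff zero_less_mult_iff) }
  { assume "c < a \<or> b < c"
    then consider "c < a" | "b < c" by blast
    thus "crs (circ_pt n a) (circ_pt n b) (circ_pt n c) < 0"
    proof cases
      case 1
      hence "sin (pi*(b-c)/n) > 0" "sin (pi*(a-c)/n) > 0"
        using sin_sign[OF n, of "b-c"] sin_sign[OF n, of "a-c"] W ab by auto
      thus ?thesis unfolding crs_circ using s2
        by (simp add: mult_less_0_iff zero_less_mult_iff)
    next
      case 2
      hence "sin (pi*(b-c)/n) < 0" "sin (pi*(a-c)/n) < 0"
        using sin_sign_neg[OF n, of "b-c"] sin_sign_neg[OF n, of "a-c"] W ab by auto
      thus ?thesis unfolding crs_circ using s2
        by (simp add: mult_less_0_iff zero_less_mult_iff)
    qed }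
qed

lemma circ_inj:
  assumes n: "n > 0" and W: "a \<in> {w..<w+real n}" "b \<in> {w..<w+real n}" and e: "circ_pt n a = circ_pt n b"
  shows "a = b"
proof (rule ccontr)
  assume "a \<noteq> b"
  then consider "a < b" | "b < a" by linarith
  thus False
  proof cases
    case 1
    have "crs (circ_pt n a) (circ_pt n b) (circ_pt n ((a+b)/2)) > 0"
      by (rule circ_sign(1)[OF n W(1,2) _ 1]) (use W 1 in auto)
    thus False using e by (simp add: crs_def)
  next
    case 2
    have "crs (circ_pt n b) (circ_pt n a) (circ_pt n ((a+b)/2)) > 0"
      by (rule circ_sign(1)[OF n W(2,1) _ 2]) (use W 2 in auto)
    thus False using e by (simp add: crs_def)
  qed
qed

lemma seg_circ_ord:
  fixes x1 x2 y1 y2 w :: real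
  assumes n: "n > 0" and W: "x1 \<in> {w..<w+real n}" "x2 \<in> {w..<w+real n}" "y1 \<in> {w..<w+real n}" "y2 \<in> {w..<w+real n}"
    and o: "x1 \<le> x2" "y1 \<le> y2"
  shows "closed_segment (circ_pt n x1) (circ_pt n x2) \<inter> closed_segment (circ_pt n y1) (circ_pt n y2) \<noteq> {}
     \<longleftrightarrow> ilv x1 x2 y1 y2"
proof
  let ?X = "closed_segment (circ_pt n x1) (circ_pt n x2)"
  let ?Y = "closed_segment (circ_pt n y1) (circ_pt n y2)"
  assume "?X \<inter> ?Y \<noteq> {}"
  then obtain z where zX: "z \<in> ?X" and zY: "z \<in> ?Y" by blast
  have c0: "crs (circ_pt n x1) (circ_pt n x2) z = 0" using crs_seg_zero[OF zX] .
  have A: "\<not> (x1 < y1 \<and> y1 < x2 \<and> x1 < y2 \<and> y2 < x2)"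
  proof
    assume h: "x1 < y1 \<and> y1 < x2 \<and> x1 < y2 \<and> y2 < x2"
    hence "x1 < x2" by auto
    have "crs (circ_pt n x1) (circ_pt n x2) (circ_pt n y1) > 0" "crs (circ_pt n x1) (circ_pt n x2) (circ_pt n y2) > 0"
      using circ_sign(1)[OF n W(1,2) W(3) \<open>x1 < x2\<close>] circ_sign(1)[OF n W(1,2) W(4) \<open>x1 < x2\<close>] h by auto
    from crs_seg_pos[OF zY this] c0 show False by simp
  qed
  have B: "\<not> ((y1 < x1 \<or> x2 < y1) \<and> (y2 < x1 \<or> x2 < y2))"
  proof
    assume h: "(y1 < x1 \<or> x2 < y1) \<and> (y2 < x1 \<or> x2 < y2)"
    show False
    proof (cases "x1 < x2")
      case True
      have "crs (circ_pt n x1) (circ_pt n x2) (circ_pt n y1) < 0" "crs (circ_pt n x1) (circ_pt n x2) (circ_pt n y2) < 0"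
        using circ_sign(2)[OF n W(1,2) W(3) True] circ_sign(2)[OF n W(1,2) W(4) True] h by auto
      from crs_seg_neg[OF zY this] c0 show False by simp
    next
      case False
      hence "x1 = x2" using o by auto
      hence z: "z = circ_pt n x1" using zX by simp
      show False
      proof (cases "y1 < y2")
        case True
        have "crs (circ_pt n y1) (circ_pt n y2) (circ_pt n x1) \<noteq> 0"
        proof (cases "y1 < x1 \<and> x1 < y2")
          case True
          thus ?thesis using circ_sign(1)[OF n W(3,4) W(1) \<open>y1 < y2\<close>] by auto
        next
          case False
          hence "x1 < y1 \<or> y2 < x1" using h \<open>x1 = x2\<close> by auto
          thus ?thesis using circ_sign(2)[OF n W(3,4) W(1) \<open>y1 < y2\<close>] by auto
        qed
        thus False using crs_seg_zero[OF zY] z by simp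
      next
        case False
        hence "y1 = y2" using o by auto
        hence "circ_pt n x1 = circ_pt n y1" using zY z by simp
        from circ_inj[OF n W(1) W(3) this] h \<open>x1 = x2\<close> show False by auto
      qed
    qed
  qed
  show "ilv x1 x2 y1 y2" unfolding ilv_def using A B o by (simp add: min_def max_def)
next
  assume I: "ilv x1 x2 y1 y2"
  hence I': "\<not> (x1 < y1 \<and> y1 < x2 \<and> x1 < y2 \<and> y2 < x2)" "\<not> ((y1 < x1 \<or> x2 < y1) \<and> (y2 < x1 \<or> x2 < y2))"
    unfolding ilv_def using o by (simp_all add: min_def max_def)
  show "closed_segment (circ_pt n x1) (circ_pt n x2) \<inter> closed_segment (circ_pt n y1) (circ_pt n y2) \<noteq> {}"
  proof (cases "x1 = y1 \<or> x1 = y2 \<or> x2 = y1 \<or> x2 = y2")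
    case True
    thus ?thesis by auto
  next
    case False
    have x12: "x1 < x2" using I' False o by force
    have y12: "y1 < y2" using I' False o by force
    let ?A = "circ_pt n x1" and ?B = "circ_pt n x2" and ?C = "circ_pt n y1" and ?D = "circ_pt n y2"
    consider "x1 < y1 \<and> y1 < x2 \<and> x2 < y2" | "y1 < x1 \<and> x1 < y2 \<and> y2 < x2" using I' False o by force
    thus ?thesis
    proof cases
      case 1
      have "crs ?A ?B ?C > 0" "crs ?A ?B ?D < 0" "crs ?C ?D ?A < 0" "crs ?C ?D ?B > 0"
        using circ_sign(1)[OF n W(1,2) W(3) x12] circ_sign(2)[OF n W(1,2) W(4) x12]
          circ_sign(2)[OF n W(3,4) W(1) y12] circ_sign(1)[OF n W(3,4) W(2) y12] 1 by auto
      thus ?thesis by (intro cramer) (auto simp: mult_less_0_iff)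
    next
      case 2
      have "crs ?A ?B ?C < 0" "crs ?A ?B ?D > 0" "crs ?C ?D ?A > 0" "crs ?C ?D ?B < 0"
        using circ_sign(2)[OF n W(1,2) W(3) x12] circ_sign(1)[OF n W(1,2) W(4) x12]
          circ_sign(1)[OF n W(3,4) W(1) y12] circ_sign(2)[OF n W(3,4) W(2) y12] 2 by auto
      thus ?thesis by (intro cramer) (auto simp: mult_less_0_iff)
    qed
  qed
qed

lemma ilv_sym1: "ilv x2 x1 y1 y2 = ilv x1 x2 y1 y2"
  unfolding ilv_def by (simp add: min.commute max.commute)
lemma ilv_sym2: "ilv x1 x2 y2 y1 = ilv x1 x2 y1 y2"
  unfolding ilv_def by blast

lemma seg_circ:
  fixes x1 x2 y1 y2 w :: real
  assumes n: "n > 0" and W: "x1 \<in> {w..<w+real n}" "x2 \<in> {w..<w+real n}" "y1 \<in> {w..<w+real n}" "y2 \<in> {w..<w+real n}"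
  shows "closed_segment (circ_pt n x1) (circ_pt n x2) \<inter> closed_segment (circ_pt n y1) (circ_pt n y2) \<noteq> {}
     \<longleftrightarrow> ilv x1 x2 y1 y2"
proof (cases "x1 \<le> x2")
  case True
  show ?thesis
  proof (cases "y1 \<le> y2")
    case True
    show ?thesis by (rule seg_circ_ord[OF n W \<open>x1 \<le> x2\<close> True])
  next
    case False
    show ?thesis using seg_circ_ord[OF n W(1,2) W(4,3) \<open>x1 \<le> x2\<close>] False
      by (simp add: closed_segment_commute[of "circ_pt n y1"] ilv_sym2)
  qed
next
  case False
  show ?thesis
  proof (cases "y1 \<le> y2")
    case True
    show ?thesis using seg_circ_ord[OF n W(2,1) W(3,4) _ True] False
      by (simp add: closed_segment_commute[of "circ_pt n x1"] ilv_sym1)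
  next
    case f2: False
    show ?thesis using seg_circ_ord[OF n W(2,1) W(4,3)] False f2
      by (simp add: closed_segment_commute[of "circ_pt n x1"] closed_segment_commute[of "circ_pt n y1"] ilv_sym1 ilv_sym2)
  qed
qed


definition cnt2 :: "int \<Rightarrow> int \<Rightarrow> int \<Rightarrow> int" where
  "cnt2 a b z = (if a \<le> z then 1 else 0) + (if b \<le> z then 1 else 0)"

lemma L2: fixes a b x y :: int
  assumes "\<not> ilv a b x y" "a \<noteq> x" "a \<noteq> y" "b \<noteq> x" "b \<noteq> y"
  shows "even (cnt2 a b x - cnt2 a b y)"
proof -
  have "cnt2 a b x - cnt2 a b y = -2 \<or> cnt2 a b x - cnt2 a b y = 0 \<or> cnt2 a b x - cnt2 a b y = 2"
    using assms unfolding ilv_def cnt2_def min_def max_def by smt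
  thus ?thesis by (metis dvd_0_right dvd_minus_iff dvd_refl)
qed

lemma L6: fixes a b x y x' y' :: int
  assumes "ilv x y x' y'" "\<not> ilv a b x y" "\<not> ilv a b x' y'"
   "distinct [a,b,x,y,x',y']"
  shows "even (cnt2 a b x - cnt2 a b x')"
proof -
  have "cnt2 a b x - cnt2 a b x' = -2 \<or> cnt2 a b x - cnt2 a b x' = 0 \<or> cnt2 a b x - cnt2 a b x' = 2"
    using assms unfolding ilv_def cnt2_def min_def max_def by simp smt
  thus ?thesis by (metis dvd_0_right dvd_minus_iff dvd_refl)
qed

lemma M1: fixes h :: "int \<Rightarrow> int"
  assumes "mono h" "ilv a b c d" "a \<noteq> c" "a \<noteq> d" "b \<noteq> c" "b \<noteq> d"
  shows "ilv (h a) (h b) (h c) (h d)"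
proof -
  have m: "\<And>x y. x \<le> y \<Longrightarrow> h x \<le> h y" using assms(1) by (simp add: monoD)
  show ?thesis using assms(2-) m[of a b] m[of b a] m[of a c] m[of c a] m[of a d] m[of d a]
     m[of b c] m[of c b] m[of b d] m[of d b] m[of c d] m[of d c]
    unfolding ilv_def min_def max_def by smt
qed

lemma M2: fixes h :: "int \<Rightarrow> int"
  assumes "mono h" "ilv (h a) (h b) (h c) (h d)"
  shows "ilv a b c d \<or> h a = h c \<or> h a = h d \<or> h b = h c \<or> h b = h d"
proof -
  have m: "\<And>x y. x \<le> y \<Longrightarrow> h x \<le> h y" using assms(1) by (simp add: monoD)
  show ?thesis using assms(2-) m[of a b] m[of b a] m[of a c] m[of c a] m[of a d] m[of d a]
     m[of b c] m[of c b] m[of b d] m[of d b] m[of c d] m[of d c]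
    unfolding ilv_def min_def max_def by smt
qed

lemma ROT: fixes a b c d N :: int
  assumes "distinct [a,b,c,d]" "a \<in> {1..N}" "b \<in> {1..N}" "c \<in> {1..N}" "d \<in> {1..N}"
  shows "ilv (if a = 1 then N+1 else a) (if b = 1 then N+1 else b) (if c = 1 then N+1 else c) (if d = 1 then N+1 else d)
     = ilv a b c d"
  using assms unfolding ilv_def min_def max_def by simp smt

lemma ilv_of_int: "ilv (real_of_int a) (real_of_int b) (real_of_int c) (real_of_int d) = ilv a b c d"
  unfolding ilv_def min_def max_def by simp

lemma ilv_aff: fixes a b c d k m :: real assumes "k > 0"
  shows "ilv (k*a+m) (k*b+m) (k*c+m) (k*d+m) = ilv a b c d"
  unfolding ilv_def min_def max_def using assms by simp



lemma ilv_swap: fixes a b c d :: int assumes "distinct [a,b,c,d]" shows "ilv a b c d = ilv c d a b"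
  using assms unfolding ilv_def min_def max_def by simp smt

lemma ev_comb: "even (a::int) \<Longrightarrow> even b \<Longrightarrow> c = a - b \<Longrightarrow> even c" by simp

lemma par1[simp]: "2*(a::int) \<noteq> 2*b - 1" by presburger
lemma par2[simp]: "2*(b::int) - 1 \<noteq> 2*a" by presburger

lemma ev_trans: "even ((a::int) - b) \<Longrightarrow> even (b - c) \<Longrightarrow> even (a - c)"
proof -
  assume "even (a - b)" "even (b - c)"
  hence "even ((a - b) + (b - c))" by simp
  thus ?thesis by simp
qed

lemma ev_sym: "even ((a::int) - b) \<Longrightarrow> even (b - a)"
  by (metis dvd_minus_iff minus_diff_eq)

lemma cnt2_suc: "cnt2 a b (z+1) = cnt2 a b z + (if a = z+1 then 1 else 0) + (if b = z+1 then 1 else 0)"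
  unfolding cnt2_def by auto

lemma count_aux: "x \<ge> 0 \<Longrightarrow> (\<Sum>r\<in>{1..int m}. (if 2*r-1 \<le> x then 1 else 0) + (if 2*r \<le> x then 1 else 0)) = min x (2 * int m)"
proof (induction m)
  case 0 thus ?case by simp
next
  case (Suc m)
  have e: "{1..int (Suc m)} = insert (int m + 1) {1..int m}" by auto
  have "int m + 1 \<notin> {1..int m}" by simp
  thus ?case unfolding e using Suc by (simp add: sum.insert)
qed

locale strands =
  fixes n :: nat and \<sigma> :: "int \<Rightarrow> int"
  assumes npos: "n > 0" and sbij: "bij_betw \<sigma> (idx n) (idx n)"
begin

definition e1 :: "int \<Rightarrow> int" where "e1 p = 2*p - 1"
definition e2 :: "int \<Rightarrow> int" where "e2 p = 2 * \<sigma> p"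
definition isend :: "int \<Rightarrow> int \<Rightarrow> bool" where "isend p x \<longleftrightarrow> x = e1 p \<or> x = e2 p"
definition cr :: "int \<Rightarrow> int \<Rightarrow> bool" where "cr p q \<longleftrightarrow> ilv (e2 p) (e1 p) (e2 q) (e1 q)"
definition Cg :: "(int \<times> int) set" where "Cg = {(p,q). p \<in> idx n \<and> q \<in> idx n \<and> p \<noteq> q \<and> cr p q}"
definition Ht where "Ht p q \<longleftrightarrow> (\<exists>x y. isend p x \<and> isend q y \<and> ((odd x \<and> y = x+1) \<or> (odd y \<and> x = y+1)))"
definition Dt where "Dt p q \<longleftrightarrow> (\<exists>x y. isend p x \<and> isend q y \<and>
   ((even x \<and> y = x+1) \<or> (even y \<and> x = y+1) \<or> (x = 2*int n \<and> y = 1) \<or> (y = 2*int n \<and> x = 1)))"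
definition cnt :: "int \<Rightarrow> int \<Rightarrow> int" where "cnt r z = cnt2 (e2 r) (e1 r) z"
definition W :: "int set \<Rightarrow> int \<Rightarrow> int" where "W B z = (\<Sum>u\<in>B. cnt u z)"

lemma sig_in: "p \<in> idx n \<Longrightarrow> \<sigma> p \<in> idx n"
  using sbij by (auto simp: bij_betw_def)

lemma sig_inj: "p \<in> idx n \<Longrightarrow> q \<in> idx n \<Longrightarrow> \<sigma> p = \<sigma> q \<Longrightarrow> p = q"
  using sbij by (auto simp: bij_betw_def inj_on_def)

lemma end_range: "p \<in> idx n \<Longrightarrow> isend p x \<Longrightarrow> 1 \<le> x \<and> x \<le> 2 * int n"
  using sig_in[of p] unfolding isend_def e1_def e2_def by auto

lemma end_unique: assumes "p \<in> idx n" "q \<in> idx n" "isend p x" "isend q x" shows "p = q"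
proof -
  have "\<not> (2*p - 1 = 2 * s)" for p s :: int by presburger
  thus ?thesis using assms sig_inj[of p q] unfolding isend_def e1_def e2_def by auto
qed

lemma ends_distinct: assumes "p \<in> idx n" "q \<in> idx n" "p \<noteq> q"
  shows "distinct [e2 p, e1 p, e2 q, e1 q]"
proof -
  have "\<not> (2*p - 1 = 2 * s)" for p s :: int by presburger
  thus ?thesis using assms sig_inj[of p q] unfolding e1_def e2_def by auto
qed

lemma cr_sym: assumes "p \<in> idx n" "q \<in> idx n" "p \<noteq> q" shows "cr p q = cr q p"
  unfolding cr_def using ilv_swap[OF ends_distinct[OF assms]] .

lemma total_cnt: assumes "0 \<le> x" "x \<le> 2 * int n" shows "(\<Sum>r\<in>idx n. cnt r x) = x"
proof -
  have "(\<Sum>r\<in>idx n. cnt r x) = (\<Sum>r\<in>idx n. (if 2*\<sigma> r \<le> x then 1 else 0)) + (\<Sum>r\<in>idx n. (if 2*r-1 \<le> x then 1 else 0))"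
    unfolding cnt_def cnt2_def e1_def e2_def by (simp add: sum.distrib)
  also have "(\<Sum>r\<in>idx n. (if 2*\<sigma> r \<le> x then 1 else 0)) = (\<Sum>r\<in>idx n. (if 2*r \<le> x then 1 else (0::int)))"
    using sum.reindex_bij_betw[OF sbij, of "\<lambda>r. if 2*r \<le> x then 1 else (0::int)"] by simp
  also have "\<dots> + (\<Sum>r\<in>idx n. (if 2*r-1 \<le> x then 1 else 0)) = (\<Sum>r\<in>idx n. (if 2*r-1 \<le> x then 1 else 0) + (if 2*r \<le> x then 1 else 0))"
    by (simp add: sum.distrib)
  also have "\<dots> = x" using count_aux[of x n] assms by simp
  finally show ?thesis .
qed

lemma W_diff: "W B x - W B y = (\<Sum>u\<in>B. cnt u x - cnt u y)"
  unfolding W_def by (simp add: sum_subtractf)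

lemma even_sum: "(\<And>u. u \<in> B \<Longrightarrow> even (g u :: int)) \<Longrightarrow> even (sum g B)"
  by (simp add: dvd_sum)

lemma W_suc: assumes "B \<subseteq> idx n"
  shows "W B (z+1) = W B z + (\<Sum>u\<in>B. (if e2 u = z+1 then 1 else 0) + (if e1 u = z+1 then 1 else 0))"
  unfolding W_def cnt_def cnt2_suc by (simp add: sum.distrib algebra_simps)

lemma W_suc_notend: assumes "B \<subseteq> idx n" "\<And>u. u \<in> B \<Longrightarrow> \<not> isend u (z+1)"
  shows "W B (z+1) = W B z"
proof -
  have "(\<Sum>u\<in>B. (if e2 u = z+1 then 1 else 0) + (if e1 u = z+1 then 1 else (0::int))) = 0"
  proof (intro sum.neutral ballI)
    fix u assume "u \<in> B"
    from assms(2)[OF this] show "(if e2 u = z+1 then 1 else 0) + (if e1 u = z+1 then 1 else (0::int)) = 0"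
      unfolding isend_def by auto
  qed
  thus ?thesis using W_suc[OF assms(1)] by simp
qed

lemma W_suc_end: assumes "B \<subseteq> idx n" "u0 \<in> B" "isend u0 (z+1)"
  shows "W B (z+1) = W B z + 1"
proof -
  have "(\<Sum>u\<in>B. (if e2 u = z+1 then 1 else 0) + (if e1 u = z+1 then 1 else (0::int))) =
        (\<Sum>u\<in>B. if u = u0 then 1 else 0)"
  proof (rule sum.cong[OF refl])
    fix u assume u: "u \<in> B"
    show "(if e2 u = z+1 then 1 else 0) + (if e1 u = z+1 then 1 else (0::int)) = (if u = u0 then 1 else 0)"
    proof (cases "u = u0")
      case True
      have "\<not> (e2 u0 = z+1 \<and> e1 u0 = z+1)" unfolding e1_def e2_def by presburger
      thus ?thesis using True assms(3) unfolding isend_def by auto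
    next
      case False
      have ii: "u \<in> idx n" "u0 \<in> idx n" using u assms by auto
      hence "\<not> isend u (z+1)" using end_unique[OF ii _ assms(3)] False by auto
      thus ?thesis using False unfolding isend_def by auto
    qed
  qed
  also have "\<dots> = 1" using assms(2) finite_subset[OF assms(1)] by simp
  finally show ?thesis using W_suc[OF assms(1)] by simp
qed

lemma W_zero: assumes "B \<subseteq> idx n" shows "W B 0 = 0"
  unfolding W_def
proof (intro sum.neutral ballI)
  fix u assume "u \<in> B"
  hence "u \<in> idx n" "\<sigma> u \<in> idx n" using assms sig_in by auto
  thus "cnt u 0 = 0" by (auto simp: cnt_def cnt2_def e1_def e2_def)
qed

lemma W_top: "B \<subseteq> idx n \<Longrightarrow> W B (2 * int n) = 2 * int (card B)"
proof -
  assume B: "B \<subseteq> idx n"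
  have "W B (2 * int n) = (\<Sum>u\<in>B. 2)"
    unfolding W_def
  proof (intro sum.cong refl)
    fix u assume "u \<in> B"
    hence "u \<in> idx n" "\<sigma> u \<in> idx n" using B sig_in by auto
    thus "cnt u (2 * int n) = 2" by (auto simp: cnt_def cnt2_def e1_def e2_def)
  qed
  thus ?thesis by simp
qed


lemma L2': assumes "u \<in> idx n" "r \<in> idx n" "u \<noteq> r" "\<not> cr u r" "isend r x" "isend r y"
  shows "even (cnt u x - cnt u y)"
proof -
  have d: "distinct [e2 u, e1 u, e2 r, e1 r]" using ends_distinct[OF assms(1-3)] .
  have e: "even (cnt u (e2 r) - cnt u (e1 r))" unfolding cnt_def
    by (rule L2) (use assms(4) d in \<open>auto simp: cr_def\<close>)
  show ?thesis using assms(5,6) e ev_sym unfolding isend_def by auto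
qed

lemma L6': assumes "u \<in> idx n" "r \<in> idx n" "r' \<in> idx n" "u \<noteq> r" "u \<noteq> r'" "r \<noteq> r'"
   "cr r r'" "\<not> cr u r" "\<not> cr u r'"
  shows "even (cnt u (e2 r) - cnt u (e2 r'))"
proof -
  have d: "distinct [e2 u, e1 u, e2 r, e1 r, e2 r', e1 r']"
    using ends_distinct[OF assms(1,2,4)] ends_distinct[OF assms(1,3,5)] ends_distinct[OF assms(2,3,6)] by auto
  show ?thesis unfolding cnt_def
    by (rule L6) (use assms(7-9) d in \<open>auto simp: cr_def\<close>)
qed

end

locale core = strands +
  fixes p :: int and B :: "int set"
  assumes pin: "p \<in> idx n" and Bdef: "B = {r \<in> idx n. (p, r) \<in> Cg\<^sup>*}"
begin

lemma Bsub: "B \<subseteq> idx n" using Bdef by auto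
lemma pB: "p \<in> B" using Bdef pin by auto
lemma finB: "finite B" using finite_subset[OF Bsub] by simp

lemma Cg_idx: "(a,b) \<in> Cg \<Longrightarrow> a \<in> idx n \<and> b \<in> idx n \<and> a \<noteq> b \<and> cr a b"
  unfolding Cg_def by auto

lemma F0: assumes "u \<in> B" "r \<in> idx n - B" shows "\<not> cr u r" "\<not> cr r u" "u \<noteq> r"
proof -
  have u: "u \<in> idx n" "(p,u) \<in> Cg\<^sup>*" using assms Bdef by auto
  show ne: "u \<noteq> r" using assms by auto
  show nc: "\<not> cr u r"
  proof
    assume "cr u r"
    hence "(u, r) \<in> Cg" using u assms ne unfolding Cg_def by auto
    hence "(p, r) \<in> Cg\<^sup>*" using u(2) by simp
    thus False using assms Bdef by auto
  qed
  show "\<not> cr r u" using nc cr_sym[of u r] u assms ne by auto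
qed

lemma side: assumes r: "r \<in> idx n - B" and pu: "(p,u) \<in> Cg\<^sup>*"
  shows "isend u x \<Longrightarrow> even (cnt r x - cnt r (e1 p))"
  using pu
proof (induction arbitrary: x rule: rtrancl_induct)
  case base
  have "even (cnt r x - cnt r (e1 p))"
    by (rule L2'[OF _ pin]) (use r F0[OF pB r] base in \<open>auto simp: isend_def\<close>)
  thus ?case .
next
  case (step u u')
  have uu: "u \<in> idx n" "u' \<in> idx n" "u \<noteq> u'" "cr u u'" using Cg_idx[OF step(2)] by auto
  have uB: "u \<in> B" using step(1) uu Bdef by auto
  have u'B: "u' \<in> B" using step(1,2) uu Bdef by auto
  have a: "even (cnt r (e2 u) - cnt r (e1 p))" using step(3)[of "e2 u"] by (simp add: isend_def)
  have b: "even (cnt r (e2 u') - cnt r (e2 u))"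
    using L6'[of r u' u] uu r F0[OF uB r] F0[OF u'B r] cr_sym[of u u'] by auto
  have c: "even (cnt r x - cnt r (e2 u'))"
    by (rule L2') (use r F0[OF u'B r] uu step(4) in \<open>auto simp: isend_def\<close>)
  show ?case using ev_trans[OF c ev_trans[OF b a]] .
qed

definition c0 where "c0 = e1 p - W B (e1 p)"

lemma keyc: assumes "u \<in> B" "isend u x" shows "even ((x - W B x) - c0)"
proof -
  have ui: "u \<in> idx n" "(p,u) \<in> Cg\<^sup>*" using assms Bdef by auto
  have rx: "1 \<le> x \<and> x \<le> 2 * int n" using end_range[OF ui(1) assms(2)] .
  have rp: "1 \<le> e1 p \<and> e1 p \<le> 2 * int n" using end_range[OF pin, of "e1 p"] by (simp add: isend_def)
  have fin: "finite (idx n)" by simp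
  have s: "z - W B z = (\<Sum>r\<in>idx n - B. cnt r z)" if "0 \<le> z" "z \<le> 2 * int n" for z
  proof -
    have "z = (\<Sum>r\<in>idx n. cnt r z)" using total_cnt that by simp
    also have "\<dots> = (\<Sum>r\<in>idx n - B. cnt r z) + W B z" unfolding W_def
      using sum.subset_diff[OF Bsub fin] by simp
    finally show ?thesis by simp
  qed
  have sx: "x - W B x = (\<Sum>r\<in>idx n - B. cnt r x)" using s rx by simp
  have sp: "e1 p - W B (e1 p) = (\<Sum>r\<in>idx n - B. cnt r (e1 p))" using s rp by simp
  have "(x - W B x) - c0 = (\<Sum>r\<in>idx n - B. cnt r x - cnt r (e1 p))"
    unfolding c0_def sx sp by (simp add: sum_subtractf)
  also have "even \<dots>"
    by (rule even_sum) (rule side[OF _ ui(2) assms(2)], simp)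
  finally show ?thesis .
qed

definition Phi where "Phi r = W B (e2 r)"

lemma F1: assumes "r \<in> idx n - B" "isend r x" shows "even (W B x - Phi r)"
proof -
  have "W B x - Phi r = (\<Sum>u\<in>B. cnt u x - cnt u (e2 r))" unfolding Phi_def W_diff ..
  also have "even \<dots>"
  proof (rule even_sum)
    fix u assume u: "u \<in> B"
    show "even (cnt u x - cnt u (e2 r))"
      by (rule L2') (use u Bsub F0[OF u assms(1)] assms in \<open>auto simp: isend_def\<close>)
  qed
  finally show ?thesis .
qed

lemma F2: assumes "r \<in> idx n - B" "r' \<in> idx n - B" "r \<noteq> r'" "cr r r'" shows "even (Phi r - Phi r')"
proof -
  have "Phi r - Phi r' = (\<Sum>u\<in>B. cnt u (e2 r) - cnt u (e2 r'))" unfolding Phi_def W_diff ..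
  also have "even \<dots>"
  proof (rule even_sum)
    fix u assume u: "u \<in> B"
    show "even (cnt u (e2 r) - cnt u (e2 r'))"
      by (rule L6') (use u Bsub F0[OF u assms(1)] F0[OF u assms(2)] assms in auto)
  qed
  finally show ?thesis .
qed

lemma notend_B: "r \<in> idx n - B \<Longrightarrow> isend r y \<Longrightarrow> u \<in> B \<Longrightarrow> \<not> isend u y"
  using end_unique[of u r y] Bsub by auto

lemma W_adj: assumes "r \<in> idx n - B" "isend r (z+1)" shows "W B (z+1) = W B z"
  by (rule W_suc_notend[OF Bsub]) (use notend_B[OF assms] in auto)

lemma W1: assumes "r \<in> idx n - B" "isend r 1" shows "W B 1 = 0"
  using W_adj[OF assms(1), of 0] assms W_zero[OF Bsub] by simp

lemma W2n: "even (W B (2 * int n))" using W_top[OF Bsub] by simp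

lemma F3: assumes "r \<in> idx n - B" "r' \<in> idx n - B" "Ht r r' \<or> Dt r r'" shows "even (Phi r - Phi r')"
proof -
  obtain x y where xy: "isend r x" "isend r' y" "y = x+1 \<or> x = y+1 \<or> (x = 2*int n \<and> y = 1) \<or> (y = 2*int n \<and> x = 1)"
    using assms(3) unfolding Ht_def Dt_def by blast
  have "even (W B x - W B y)"
    using xy(3)
  proof (elim disjE)
    assume h: "y = x+1"
    have "W B y = W B x" using W_adj[OF assms(2), of x] xy(2) h by simp
    thus ?thesis by simp
  next
    assume h: "x = y+1"
    have "W B x = W B y" using W_adj[OF assms(1), of y] xy(1) h by simp
    thus ?thesis by simp
  next
    assume h: "x = 2*int n \<and> y = 1"
    have "W B y = 0" using W1[OF assms(2)] xy(2) h by simp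
    thus ?thesis using W2n h by simp
  next
    assume h: "y = 2*int n \<and> x = 1"
    have "W B x = 0" using W1[OF assms(1)] xy(1) h by simp
    thus ?thesis using W2n h by simp
  qed
  moreover have "even (W B x - Phi r)" "even (W B y - Phi r')" using F1[OF assms(1) xy(1)] F1[OF assms(2) xy(2)] by auto
  ultimately have "even ((W B x - W B y) - (W B x - Phi r) + (W B y - Phi r'))" by simp
  thus ?thesis by (simp add: algebra_simps)
qed

lemma exitH: assumes "u \<in> B" "r \<in> idx n - B" "Ht u r" shows "even (Phi r - (1 - c0))"
proof -
  obtain x y where xy: "isend u x" "isend r y" "(odd x \<and> y = x+1) \<or> (odd y \<and> x = y+1)"
    using assms(3) unfolding Ht_def by blast
  have k: "even ((x - W B x) - c0)" using keyc[OF assms(1) xy(1)] .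
  have "even (W B y - (1 - c0))"
    using xy(3)
  proof
    assume h: "odd x \<and> y = x+1"
    hence w: "W B y = W B x" using W_adj[OF assms(2), of x] xy(2) by simp
    have "even (x - 1)" using h by presburger
    from ev_comb[OF this k] show ?thesis using w by simp
  next
    assume h: "odd y \<and> x = y+1"
    hence w: "W B x = W B y + 1" using W_suc_end[OF Bsub assms(1), of y] xy(1) by simp
    have "even (x - 2)" using h by presburger
    from ev_comb[OF this k] show ?thesis using w by simp
  qed
  thus ?thesis using F1[OF assms(2) xy(2)] by (metis ev_sym ev_trans)
qed

lemma exitD: assumes "u \<in> B" "r \<in> idx n - B" "Dt u r" shows "even (Phi r + c0)"
proof -
  obtain x y where xy: "isend u x" "isend r y"
    "(even x \<and> y = x+1) \<or> (even y \<and> x = y+1) \<or> (x = 2*int n \<and> y = 1) \<or> (y = 2*int n \<and> x = 1)"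
    using assms(3) unfolding Dt_def by blast
  have k: "even ((x - W B x) - c0)" using keyc[OF assms(1) xy(1)] .
  have "even (W B y + c0)"
    using xy(3)
  proof (elim disjE)
    assume h: "even x \<and> y = x+1"
    hence w: "W B y = W B x" using W_adj[OF assms(2), of x] xy(2) by simp
    have "even x" using h by simp
    show ?thesis by (rule ev_comb[OF \<open>even x\<close> k]) (use w in simp)
  next
    assume h: "even y \<and> x = y+1"
    hence w: "W B x = W B y + 1" using W_suc_end[OF Bsub assms(1), of y] xy(1) by simp
    have "even (x - 1)" using h by simp
    show ?thesis by (rule ev_comb[OF \<open>even (x - 1)\<close> k]) (use w in simp)
  next
    assume h: "x = 2*int n \<and> y = 1"
    hence w: "W B y = 0" using W1[OF assms(2)] xy(2) by simp
    have e: "even (x - W B x)" using h W2n by simp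
    show ?thesis by (rule ev_comb[OF e k]) (use w in simp)
  next
    assume h: "y = 2*int n \<and> x = 1"
    hence w: "W B x = 1" using W_suc_end[OF Bsub assms(1), of 0] W_zero[OF Bsub] xy(1) by simp
    have e: "even (W B y)" using h W2n by simp
    show ?thesis by (rule ev_comb[OF e k]) (use w h in simp)
  qed
  moreover have "even (W B y - Phi r)" using F1[OF assms(2) xy(2)] .
  ultimately have "even ((W B y + c0) - (W B y - Phi r))" by (rule dvd_diff)
  thus ?thesis by (simp add: algebra_simps)
qed

lemma path_gen:
  assumes G: "G \<subseteq> {(a,b). a \<in> idx n \<and> b \<in> idx n \<and> a \<noteq> b \<and> (cr a b \<or> T a b)}"
    and ex: "\<And>u r. u \<in> B \<Longrightarrow> r \<in> idx n - B \<Longrightarrow> T u r \<Longrightarrow> even (Phi r - \<alpha>)"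
    and mid: "\<And>r r'. r \<in> idx n - B \<Longrightarrow> r' \<in> idx n - B \<Longrightarrow> T r r' \<Longrightarrow> even (Phi r - Phi r')"
    and pq: "(p,q) \<in> G\<^sup>*"
  shows "q \<in> B \<or> (q \<in> idx n - B \<and> even (Phi q - \<alpha>))"
  using pq
proof (induction rule: rtrancl_induct)
  case base thus ?case using pB by simp
next
  case (step v v')
  have vv: "v \<in> idx n" "v' \<in> idx n" "v \<noteq> v'" "cr v v' \<or> T v v'" using G step(2) by auto
  show ?case
  proof (cases "v' \<in> B")
    case True thus ?thesis by simp
  next
    case False
    hence v'n: "v' \<in> idx n - B" using vv by simp
    show ?thesis
    proof (cases "v \<in> B")
      case True
      hence "T v v'" using F0[OF True v'n] vv by auto
      thus ?thesis using ex[OF True v'n] v'n by simp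
    next
      case False
      hence vn: "v \<in> idx n - B" and ih: "even (Phi v - \<alpha>)" using step(3) vv by auto
      have "even (Phi v' - Phi v)"
        using vv(4) F2[OF vn v'n vv(3)] mid[OF vn v'n] by (auto simp: ev_sym)
      thus ?thesis using ev_trans[OF _ ih] v'n by blast
    qed
  qed
qed

end

context strands begin

theorem core_thm:
  assumes p: "p \<in> idx n"
    and H: "Hg \<subseteq> {(a,b). a \<in> idx n \<and> b \<in> idx n \<and> a \<noteq> b \<and> (cr a b \<or> Ht a b)}"
    and D: "Dg \<subseteq> {(a,b). a \<in> idx n \<and> b \<in> idx n \<and> a \<noteq> b \<and> (cr a b \<or> Dt a b)}"
    and ph: "(p,q) \<in> Hg\<^sup>*" and pd: "(p,q) \<in> Dg\<^sup>*"
  shows "(p,q) \<in> Cg\<^sup>*"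
proof -
  define B where "B = {r \<in> idx n. (p, r) \<in> Cg\<^sup>*}"
  interpret c: core n \<sigma> p B using p B_def by unfold_locales auto
  have 1: "q \<in> B \<or> (q \<in> idx n - B \<and> even (c.Phi q - (1 - c.c0)))"
  proof (rule c.path_gen[OF H _ _ ph])
    show "\<And>u r. u \<in> B \<Longrightarrow> r \<in> idx n - B \<Longrightarrow> Ht u r \<Longrightarrow> even (c.Phi r - (1 - c.c0))"
      by (rule c.exitH)
    show "\<And>r r'. r \<in> idx n - B \<Longrightarrow> r' \<in> idx n - B \<Longrightarrow> Ht r r' \<Longrightarrow> even (c.Phi r - c.Phi r')"
      using c.F3 by blast
  qed
  have 2: "q \<in> B \<or> (q \<in> idx n - B \<and> even (c.Phi q - (- c.c0)))"
  proof (rule c.path_gen[OF D _ _ pd])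
    show "\<And>u r. u \<in> B \<Longrightarrow> r \<in> idx n - B \<Longrightarrow> Dt u r \<Longrightarrow> even (c.Phi r - (- c.c0))"
      using c.exitD by simp
    show "\<And>r r'. r \<in> idx n - B \<Longrightarrow> r' \<in> idx n - B \<Longrightarrow> Dt r r' \<Longrightarrow> even (c.Phi r - c.Phi r')"
      using c.F3 by blast
  qed
  have "q \<in> B"
  proof (rule ccontr)
    assume "q \<notin> B"
    hence a: "even (c.Phi q - (1 - c.c0))" and b: "even (c.Phi q - (- c.c0))" using 1 2 by auto
    have "even ((c.Phi q - (- c.c0)) - (c.Phi q - (1 - c.c0)))" using a b by (rule dvd_diff[rotated])
    thus False by simp
  qed
  thus ?thesis using B_def by simp
qed

end



lemma per_mult:
  assumes per: "\<forall>j. f (j + int n) = f j + int n"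
  shows "f (j + m * int n) = f j + m * int n"
proof -
  have nat_case: "f (j + int k * int n) = f j + int k * int n" for j k
  proof (induction k arbitrary: j)
    case 0 thus ?case by simp
  next
    case (Suc k)
    have "f (j + int (Suc k) * int n) = f ((j + int k * int n) + int n)" by (simp add: algebra_simps)
    also have "\<dots> = f (j + int k * int n) + int n" using per by simp
    also have "\<dots> = f j + int (Suc k) * int n" using Suc by (simp add: algebra_simps)
    finally show ?case .
  qed
  show ?thesis
  proof (cases "m \<ge> 0")
    case True
    then obtain k where "m = int k" by (metis nonneg_int_cases)
    thus ?thesis using nat_case by simp
  next
    case False
    then obtain k where k: "m = - int k" by (metis le_cases neg_int_cases nonpos_int_cases)
    have "f j = f ((j + m * int n) + int k * int n)" using k by (simp add: algebra_simps)
    also have "\<dots> = f (j + m * int n) + int k * int n" by (rule nat_case)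
    finally show ?thesis using k by (simp add: algebra_simps)
  qed
qed

lemma fbar_in: "n > 0 \<Longrightarrow> fbar n f s \<in> idx n"
  unfolding fbar_def by (auto simp: pos_mod_bound) (smt (verit) of_nat_0_less_iff pos_mod_bound)

lemma fbar_inj:
  assumes n: "n > 0" and b: "bounded_affine_perm k n f"
  shows "inj_on (fbar n f) (idx n)"
proof (rule inj_onI)
  fix s t assume s: "s \<in> idx n" and t: "t \<in> idx n" and e: "fbar n f s = fbar n f t"
  have bij: "bij f" and per: "\<forall>j. f (j + int n) = f j + int n" using b unfolding bounded_affine_perm_def by auto
  have "(f s - 1) mod int n = (f t - 1) mod int n" using e unfolding fbar_def by simp
  hence "int n dvd (f s - 1) - (f t - 1)" by (simp add: mod_eq_dvd_iff)
  then obtain m where m: "f s - f t = int n * m" by (auto simp: dvd_def)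
  have "f s = f (t + m * int n)" using per_mult[OF per, of t m] m by (simp add: algebra_simps)
  hence st: "s = t + m * int n" using bij by (simp add: bij_def inj_eq)
  show "s = t"
  proof (rule ccontr)
    assume "s \<noteq> t"
    hence "m \<noteq> 0" using st by auto
    hence "\<bar>m\<bar> * int n \<ge> 1 * int n" by (intro mult_right_mono) auto
    hence "\<bar>s - t\<bar> \<ge> int n" using st by (simp add: abs_mult)
    thus False using s t by auto
  qed
qed

lemma fbar_bij:
  assumes n: "n > 0" and b: "bounded_affine_perm k n f"
  shows "bij_betw (fbar n f) (idx n) (idx n)"
proof -
  have i: "inj_on (fbar n f) (idx n)" by (rule fbar_inj[OF n b])
  have "fbar n f ` idx n \<subseteq> idx n" using fbar_in[OF n] by auto
  hence "fbar n f ` idx n = idx n" using endo_inj_surj[OF _ _ i] by simp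
  thus ?thesis using i by (simp add: bij_betw_def)
qed

lemma circ_per: "n > 0 \<Longrightarrow> circ_pt n (x + real n) = circ_pt n x"
proof -
  assume n: "n > 0"
  have "- 2 * pi * (x + real n) / real n = - 2 * pi * x / real n + (- 2 * pi)"
    using n by (simp add: field_simps)
  hence "circ_pt n (x + real n) = cis (- 2 * pi * x / real n) * cis (- 2 * pi)"
    unfolding circ_pt_def by (simp add: cis_mult)
  also have "cis (- 2 * pi) = 1" using cis_multiple_2pi[of "-1"] by simp
  finally show ?thesis unfolding circ_pt_def by simp
qed

lemma hpair: fixes a b :: int
  assumes "(a+1) div 2 = (b+1) div 2" "a \<noteq> b" shows "(odd a \<and> b = a+1) \<or> (odd b \<and> a = b+1)"
  using assms by presburger

lemma ddpair: fixes a b N :: int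
  assumes "a \<in> {1..2*N}" "b \<in> {1..2*N}" "a \<noteq> b"
   "(if a = 1 then 2*N+1 else a) div 2 + 1 = (if b = 1 then 2*N+1 else b) div 2 + 1"
  shows "(even a \<and> b = a+1) \<or> (even b \<and> a = b+1) \<or> (a = 2*N \<and> b = 1) \<or> (b = 2*N \<and> a = 1)"
  using assms by (auto split: if_splits) presburger+




lemma real_idx: "v \<in> idx n \<Longrightarrow> 1 \<le> real_of_int v \<and> real_of_int v \<le> real n"
proof -
  assume "v \<in> idx n"
  hence "1 \<le> v" "v \<le> int n" by auto
  hence "real_of_int 1 \<le> real_of_int v" "real_of_int v \<le> real_of_int (int n)" by (simp_all only: of_int_le_iff)
  thus ?thesis by simp
qed

context strands begin

lemma geoC: assumes "p \<in> idx n" "q \<in> idx n"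
  shows "closed_segment (bplus n (\<sigma> p)) (bminus n p) \<inter> closed_segment (bplus n (\<sigma> q)) (bminus n q) \<noteq> {}
     \<longleftrightarrow> cr p q"
proof -
  have r: "1 \<le> real_of_int (\<sigma> p) \<and> real_of_int (\<sigma> p) \<le> real n" "1 \<le> real_of_int p \<and> real_of_int p \<le> real n"
     "1 \<le> real_of_int (\<sigma> q) \<and> real_of_int (\<sigma> q) \<le> real n" "1 \<le> real_of_int q \<and> real_of_int q \<le> real n"
    using real_idx[OF sig_in[OF assms(1)]] real_idx[OF assms(1)] real_idx[OF sig_in[OF assms(2)]] real_idx[OF assms(2)] by auto
  have w: "real_of_int (\<sigma> p) + 1/4 \<in> {3/4..<3/4 + real n}" "real_of_int p - 1/4 \<in> {3/4..<3/4 + real n}"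
    "real_of_int (\<sigma> q) + 1/4 \<in> {3/4..<3/4 + real n}" "real_of_int q - 1/4 \<in> {3/4..<3/4 + real n}"
    using r by auto
  have e: "1/2 * real_of_int (e2 p) + 1/4 = real_of_int (\<sigma> p) + 1/4" "1/2 * real_of_int (e1 p) + 1/4 = real_of_int p - 1/4"
     "1/2 * real_of_int (e2 q) + 1/4 = real_of_int (\<sigma> q) + 1/4" "1/2 * real_of_int (e1 q) + 1/4 = real_of_int q - 1/4"
    unfolding e1_def e2_def by (simp_all add: field_simps)
  have "closed_segment (bplus n (\<sigma> p)) (bminus n p) \<inter> closed_segment (bplus n (\<sigma> q)) (bminus n q) \<noteq> {}
     \<longleftrightarrow> ilv (real_of_int (\<sigma> p) + 1/4) (real_of_int p - 1/4) (real_of_int (\<sigma> q) + 1/4) (real_of_int q - 1/4)"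
    unfolding bplus_def bminus_def by (rule seg_circ[OF npos w])
  also have "\<dots> \<longleftrightarrow> ilv (1/2 * real_of_int (e2 p) + 1/4) (1/2 * real_of_int (e1 p) + 1/4)
       (1/2 * real_of_int (e2 q) + 1/4) (1/2 * real_of_int (e1 q) + 1/4)"
    unfolding e ..
  also have "\<dots> \<longleftrightarrow> ilv (real_of_int (e2 p)) (real_of_int (e1 p)) (real_of_int (e2 q)) (real_of_int (e1 q))"
    by (rule ilv_aff) simp
  also have "\<dots> \<longleftrightarrow> cr p q" unfolding ilv_of_int cr_def ..
  finally show ?thesis .
qed

lemma geoH: assumes "p \<in> idx n" "q \<in> idx n"
  shows "closed_segment (bpt n (\<sigma> p)) (bpt n p) \<inter> closed_segment (bpt n (\<sigma> q)) (bpt n q) \<noteq> {}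
     \<longleftrightarrow> ilv (\<sigma> p) p (\<sigma> q) q"
proof -
  have r: "1 \<le> real_of_int (\<sigma> p) \<and> real_of_int (\<sigma> p) \<le> real n" "1 \<le> real_of_int p \<and> real_of_int p \<le> real n"
     "1 \<le> real_of_int (\<sigma> q) \<and> real_of_int (\<sigma> q) \<le> real n" "1 \<le> real_of_int q \<and> real_of_int q \<le> real n"
    using real_idx[OF sig_in[OF assms(1)]] real_idx[OF assms(1)] real_idx[OF sig_in[OF assms(2)]] real_idx[OF assms(2)] by auto
  have w: "real_of_int (\<sigma> p) \<in> {1..<1 + real n}" "real_of_int p \<in> {1..<1 + real n}"
    "real_of_int (\<sigma> q) \<in> {1..<1 + real n}" "real_of_int q \<in> {1..<1 + real n}"
    using r by auto
  have "closed_segment (bpt n (\<sigma> p)) (bpt n p) \<inter> closed_segment (bpt n (\<sigma> q)) (bpt n q) \<noteq> {}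
     \<longleftrightarrow> ilv (real_of_int (\<sigma> p)) (real_of_int p) (real_of_int (\<sigma> q)) (real_of_int q)"
    unfolding bpt_def by (rule seg_circ[OF npos w])
  also have "\<dots> \<longleftrightarrow> ilv (\<sigma> p) p (\<sigma> q) q" by (rule ilv_of_int)
  finally show ?thesis .
qed

definition dl :: "int \<Rightarrow> int" where "dl p = (if \<sigma> p = int n then 1 else \<sigma> p + 1)"
definition Rf :: "int \<Rightarrow> int" where "Rf v = (if v = 1 then int n + 1 else v)"
definition rot :: "int \<Rightarrow> int" where "rot x = (if x = 1 then 2 * int n + 1 else x)"
definition dd :: "int \<Rightarrow> int" where "dd x = x div 2 + 1"

lemma dl_in: "p \<in> idx n \<Longrightarrow> dl p \<in> idx n"
  using sig_in[of p] npos unfolding dl_def by auto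

lemma bpt_Rf: "bpt n v = circ_pt n (real_of_int (Rf v))"
  unfolding bpt_def Rf_def using circ_per[OF npos, of 1] by (auto simp: add.commute)

lemma Rf_range: "v \<in> idx n \<Longrightarrow> 2 \<le> real_of_int (Rf v) \<and> real_of_int (Rf v) \<le> real n + 1"
proof -
  assume v: "v \<in> idx n"
  have "2 \<le> Rf v \<and> Rf v \<le> int n + 1" using v npos unfolding Rf_def by auto
  hence "real_of_int 2 \<le> real_of_int (Rf v) \<and> real_of_int (Rf v) \<le> real_of_int (int n + 1)"
    by (simp only: of_int_le_iff)
  thus ?thesis by simp
qed

lemma geoD0: assumes "p \<in> idx n" "q \<in> idx n"
  shows "closed_segment (bpt n (dl p)) (bpt n p) \<inter> closed_segment (bpt n (dl q)) (bpt n q) \<noteq> {}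
     \<longleftrightarrow> ilv (Rf (dl p)) (Rf p) (Rf (dl q)) (Rf q)"
proof -
  have r: "2 \<le> real_of_int (Rf (dl p)) \<and> real_of_int (Rf (dl p)) \<le> real n + 1"
    "2 \<le> real_of_int (Rf p) \<and> real_of_int (Rf p) \<le> real n + 1"
    "2 \<le> real_of_int (Rf (dl q)) \<and> real_of_int (Rf (dl q)) \<le> real n + 1"
    "2 \<le> real_of_int (Rf q) \<and> real_of_int (Rf q) \<le> real n + 1"
    using Rf_range[OF dl_in[OF assms(1)]] Rf_range[OF assms(1)] Rf_range[OF dl_in[OF assms(2)]] Rf_range[OF assms(2)] by auto
  have w: "real_of_int (Rf (dl p)) \<in> {2..<2 + real n}" "real_of_int (Rf p) \<in> {2..<2 + real n}"
    "real_of_int (Rf (dl q)) \<in> {2..<2 + real n}" "real_of_int (Rf q) \<in> {2..<2 + real n}"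
    using r by auto
  have "closed_segment (bpt n (dl p)) (bpt n p) \<inter> closed_segment (bpt n (dl q)) (bpt n q) \<noteq> {}
     \<longleftrightarrow> ilv (real_of_int (Rf (dl p))) (real_of_int (Rf p)) (real_of_int (Rf (dl q))) (real_of_int (Rf q))"
    unfolding bpt_Rf by (rule seg_circ[OF npos w])
  also have "\<dots> \<longleftrightarrow> ilv (Rf (dl p)) (Rf p) (Rf (dl q)) (Rf q)" by (rule ilv_of_int)
  finally show ?thesis .
qed

lemma Rf_dd: assumes "p \<in> idx n" shows "Rf (dl p) = dd (rot (e2 p))" "Rf p = dd (rot (e1 p))"
proof -
  have s: "1 \<le> \<sigma> p" "\<sigma> p \<le> int n" using sig_in[OF assms] by auto
  show "Rf (dl p) = dd (rot (e2 p))" using s unfolding Rf_def dl_def dd_def rot_def e2_def by auto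
  have "1 \<le> p" "p \<le> int n" using assms by auto
  thus "Rf p = dd (rot (e1 p))" unfolding Rf_def dd_def rot_def e1_def by auto
qed

lemma mono_h: "mono (\<lambda>x::int. (x + 1) div 2)"
  by (auto intro!: monoI zdiv_mono1)

lemma mono_dd: "mono dd"
  unfolding dd_def by (auto intro!: monoI zdiv_mono1)

lemma h_e: "p \<in> idx n \<Longrightarrow> (e2 p + 1) div 2 = \<sigma> p \<and> (e1 p + 1) div 2 = p"
  unfolding e1_def e2_def by simp

lemma e_range: "p \<in> idx n \<Longrightarrow> e1 p \<in> {1..2*int n} \<and> e2 p \<in> {1..2*int n}"
  using end_range[of p] unfolding isend_def by auto

lemma H_fwd: assumes "p \<in> idx n" "q \<in> idx n" "p \<noteq> q" "cr p q" shows "ilv (\<sigma> p) p (\<sigma> q) q"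
proof -
  have d: "distinct [e2 p, e1 p, e2 q, e1 q]" by (rule ends_distinct[OF assms(1-3)])
  have "ilv ((e2 p + 1) div 2) ((e1 p + 1) div 2) ((e2 q + 1) div 2) ((e1 q + 1) div 2)"
    using M1[OF mono_h, of "e2 p" "e1 p" "e2 q" "e1 q"] assms(4) d unfolding cr_def by auto
  thus ?thesis using h_e[OF assms(1)] h_e[OF assms(2)] by simp
qed

lemma H_bwd: assumes "p \<in> idx n" "q \<in> idx n" "p \<noteq> q" "ilv (\<sigma> p) p (\<sigma> q) q" shows "cr p q \<or> Ht p q"
proof -
  have d: "distinct [e2 p, e1 p, e2 q, e1 q]" by (rule ends_distinct[OF assms(1-3)])
  have "ilv ((e2 p + 1) div 2) ((e1 p + 1) div 2) ((e2 q + 1) div 2) ((e1 q + 1) div 2)"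
    using h_e[OF assms(1)] h_e[OF assms(2)] assms(4) by simp
  from M2[OF mono_h this] show ?thesis
  proof (elim disjE)
    assume "ilv (e2 p) (e1 p) (e2 q) (e1 q)" thus ?thesis unfolding cr_def by simp
  next
    assume h: "(e2 p + 1) div 2 = (e2 q + 1) div 2"
    have "e2 p \<noteq> e2 q" using d by simp
    from hpair[OF h this] show ?thesis unfolding Ht_def isend_def by blast
  next
    assume h: "(e2 p + 1) div 2 = (e1 q + 1) div 2"
    have "e2 p \<noteq> e1 q" using d by simp
    from hpair[OF h this] show ?thesis unfolding Ht_def isend_def by blast
  next
    assume h: "(e1 p + 1) div 2 = (e2 q + 1) div 2"
    have "e1 p \<noteq> e2 q" using d by simp
    from hpair[OF h this] show ?thesis unfolding Ht_def isend_def by blast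
  next
    assume h: "(e1 p + 1) div 2 = (e1 q + 1) div 2"
    have "e1 p \<noteq> e1 q" using d by simp
    from hpair[OF h this] show ?thesis unfolding Ht_def isend_def by blast
  qed
qed

lemma rot_range: "x \<in> {1..2*int n} \<Longrightarrow> rot x \<in> {2..2*int n+1}"
  unfolding rot_def using npos by auto

lemma rot_inj: "x \<in> {1..2*int n} \<Longrightarrow> y \<in> {1..2*int n} \<Longrightarrow> rot x = rot y \<Longrightarrow> x = y"
  unfolding rot_def by (auto split: if_splits)

lemma cr_rot: assumes "p \<in> idx n" "q \<in> idx n" "p \<noteq> q"
  shows "ilv (rot (e2 p)) (rot (e1 p)) (rot (e2 q)) (rot (e1 q)) = cr p q"
  unfolding rot_def cr_def
  by (rule ROT[of _ _ _ _ "2 * int n"]) (use ends_distinct[OF assms] e_range[OF assms(1)] e_range[OF assms(2)] in auto)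

lemma D_fwd: assumes "p \<in> idx n" "q \<in> idx n" "p \<noteq> q" "cr p q" shows "ilv (Rf (dl p)) (Rf p) (Rf (dl q)) (Rf q)"
proof -
  have d: "distinct [e2 p, e1 p, e2 q, e1 q]" by (rule ends_distinct[OF assms(1-3)])
  have rg: "e1 p \<in> {1..2*int n}" "e2 p \<in> {1..2*int n}" "e1 q \<in> {1..2*int n}" "e2 q \<in> {1..2*int n}"
    using e_range assms by auto
  have d': "rot (e2 p) \<noteq> rot (e2 q)" "rot (e2 p) \<noteq> rot (e1 q)" "rot (e1 p) \<noteq> rot (e2 q)" "rot (e1 p) \<noteq> rot (e1 q)"
    using rot_inj[OF rg(2) rg(4)] rot_inj[OF rg(2) rg(3)] rot_inj[OF rg(1) rg(4)] rot_inj[OF rg(1) rg(3)] d by auto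
  have "ilv (rot (e2 p)) (rot (e1 p)) (rot (e2 q)) (rot (e1 q))" using cr_rot[OF assms(1-3)] assms(4) by simp
  from M1[OF mono_dd this d'] show ?thesis using Rf_dd[OF assms(1)] Rf_dd[OF assms(2)] by simp
qed

lemma D_bwd: assumes "p \<in> idx n" "q \<in> idx n" "p \<noteq> q" "ilv (Rf (dl p)) (Rf p) (Rf (dl q)) (Rf q)" shows "cr p q \<or> Dt p q"
proof -
  have d: "distinct [e2 p, e1 p, e2 q, e1 q]" by (rule ends_distinct[OF assms(1-3)])
  have rg: "e1 p \<in> {1..2*int n}" "e2 p \<in> {1..2*int n}" "e1 q \<in> {1..2*int n}" "e2 q \<in> {1..2*int n}"
    using e_range assms by auto
  have il: "ilv (dd (rot (e2 p))) (dd (rot (e1 p))) (dd (rot (e2 q))) (dd (rot (e1 q)))"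
    using Rf_dd[OF assms(1)] Rf_dd[OF assms(2)] assms(4) by simp
  have dp: "(even x \<and> y = x+1) \<or> (even y \<and> x = y+1) \<or> (x = 2*int n \<and> y = 1) \<or> (y = 2*int n \<and> x = 1)"
    if "x \<noteq> y" "x \<in> {1..2*int n}" "y \<in> {1..2*int n}" "dd (rot x) = dd (rot y)" for x y
    using ddpair[of x "int n" y] that unfolding dd_def rot_def by simp
  from M2[OF mono_dd il] show ?thesis
  proof (elim disjE)
    assume "ilv (rot (e2 p)) (rot (e1 p)) (rot (e2 q)) (rot (e1 q))" thus ?thesis using cr_rot[OF assms(1-3)] by simp
  next
    assume h: "dd (rot (e2 p)) = dd (rot (e2 q))"
    have "e2 p \<noteq> e2 q" using d by simp
    from dp[OF this rg(2) rg(4) h] show ?thesis unfolding Dt_def isend_def by blast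
  next
    assume h: "dd (rot (e2 p)) = dd (rot (e1 q))"
    have "e2 p \<noteq> e1 q" using d by simp
    from dp[OF this rg(2) rg(3) h] show ?thesis unfolding Dt_def isend_def by blast
  next
    assume h: "dd (rot (e1 p)) = dd (rot (e2 q))"
    have "e1 p \<noteq> e2 q" using d by simp
    from dp[OF this rg(1) rg(4) h] show ?thesis unfolding Dt_def isend_def by blast
  next
    assume h: "dd (rot (e1 p)) = dd (rot (e1 q))"
    have "e1 p \<noteq> e1 q" using d by simp
    from dp[OF this rg(1) rg(3) h] show ?thesis unfolding Dt_def isend_def by blast
  qed
qed

end



theorem mainTheorem13:
  fixes k :: int and n :: nat and f :: "int \<Rightarrow> int"
  assumes "bounded_affine_perm k n f" and "loopless f"
  shows "(graph_connected n (crossing_graph n f) \<longleftrightarrow>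
            graph_connected n (hook_graph n f) \<and> graph_connected n (hook_graph n (fdown f)))
       \<and> (\<forall>p\<in>idx n. \<forall>q\<in>idx n.
            (p, q) \<in> (crossing_graph n f)\<^sup>* \<longleftrightarrow>
            (p, q) \<in> (hook_graph n f)\<^sup>* \<and> (p, q) \<in> (hook_graph n (fdown f))\<^sup>*)"
proof -
  note b = assms(1)
  have npos: "n > 0"
  proof (rule ccontr)
    assume "\<not> n > 0"
    hence "n = 0" by simp
    hence "f 0 \<le> 0" using b unfolding bounded_affine_perm_def by (metis add_0 of_nat_0)
    thus False using assms(2) unfolding loopless_def by (metis not_le)
  qed
  have per: "\<forall>j. f (j + int n) = f j + int n" using b by (simp add: bounded_affine_perm_def)
  have fb: "bij_betw (fbar n f) (idx n) (idx n)" by (rule fbar_bij[OF npos b])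
  have finj: "inj_on (fbar n f) (idx n)" using fb by (simp add: bij_betw_def)
  have fim: "fbar n f ` idx n = idx n" using fb by (simp add: bij_betw_def)
  define \<sigma> where "\<sigma> = inv_into (idx n) (fbar n f)"
  have sb: "bij_betw \<sigma> (idx n) (idx n)" using bij_betw_inv_into[OF fb] \<sigma>_def by simp
  interpret S: strands n \<sigma> by unfold_locales (rule npos, rule sb)
  have fs: "fbar n f (\<sigma> p) = p" if "p \<in> idx n" for p
    unfolding \<sigma>_def by (rule f_inv_into_f) (use that fim in simp)
  have su: "\<sigma> p = s" if "s \<in> idx n" "fbar n f s = p" for s p
    unfolding \<sigma>_def using inv_into_f_f[OF finj that(1)] that(2) by simp
  have Cchar: "crossing_graph n f = S.Cg"
  proof -
    have "(p, q) \<in> crossing_graph n f \<longleftrightarrow> (p, q) \<in> S.Cg" for p q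
    proof
      assume "(p, q) \<in> crossing_graph n f"
      then obtain s t where h: "p \<in> idx n" "q \<in> idx n" "p \<noteq> q" "s \<in> idx n" "t \<in> idx n" "fbar n f s = p" "fbar n f t = q"
        "closed_segment (bplus n s) (bminus n p) \<inter> closed_segment (bplus n t) (bminus n q) \<noteq> {}"
        unfolding crossing_graph_def by blast
      have "\<sigma> p = s" "\<sigma> q = t" using su h by auto
      thus "(p, q) \<in> S.Cg" using h S.geoC[OF h(1,2)] unfolding S.Cg_def by auto
    next
      assume "(p, q) \<in> S.Cg"
      hence h: "p \<in> idx n" "q \<in> idx n" "p \<noteq> q" "S.cr p q" unfolding S.Cg_def by auto
      show "(p, q) \<in> crossing_graph n f" unfolding crossing_graph_def
        using h S.geoC[OF h(1,2)] S.sig_in[OF h(1)] S.sig_in[OF h(2)] fs[OF h(1)] fs[OF h(2)] by blast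
    qed
    thus ?thesis by auto
  qed
  have Hchar: "(p, q) \<in> hook_graph n f \<longleftrightarrow> p \<in> idx n \<and> q \<in> idx n \<and> p \<noteq> q \<and> ilv (\<sigma> p) p (\<sigma> q) q" for p q
  proof
    assume "(p, q) \<in> hook_graph n f"
    then obtain s t where h: "p \<in> idx n" "q \<in> idx n" "p \<noteq> q" "s \<in> idx n" "t \<in> idx n" "fbar n f s = p" "fbar n f t = q"
      "closed_segment (bpt n s) (bpt n p) \<inter> closed_segment (bpt n t) (bpt n q) \<noteq> {}"
      unfolding hook_graph_def by blast
    have "\<sigma> p = s" "\<sigma> q = t" using su h by auto
    thus "p \<in> idx n \<and> q \<in> idx n \<and> p \<noteq> q \<and> ilv (\<sigma> p) p (\<sigma> q) q" using h S.geoH[OF h(1,2)] by auto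
  next
    assume h: "p \<in> idx n \<and> q \<in> idx n \<and> p \<noteq> q \<and> ilv (\<sigma> p) p (\<sigma> q) q"
    show "(p, q) \<in> hook_graph n f" unfolding hook_graph_def
      using h S.geoH[of p q] S.sig_in[of p] S.sig_in[of q] fs[of p] fs[of q] by blast
  qed
  have f0: "fbar n f 0 = fbar n f (int n)"
  proof -
    have "f (int n) - 1 = (f 0 - 1) + int n" using per[rule_format, of 0] by simp
    hence "(f (int n) - 1) mod int n = (f 0 - 1) mod int n" by (simp only: mod_add_self2)
    thus ?thesis unfolding fbar_def by simp
  qed
  have fdu: "fbar n (fdown f) s = p \<longleftrightarrow> s = S.dl p" if "s \<in> idx n" "p \<in> idx n" for s p
  proof -
    have fd: "fbar n (fdown f) s = fbar n f (s - 1)" unfolding fbar_def fdown_def by simp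
    show ?thesis
    proof (cases "s = 1")
      case True
      have "fbar n (fdown f) s = p \<longleftrightarrow> fbar n f (int n) = p" using fd f0 True by simp
      also have "\<dots> \<longleftrightarrow> \<sigma> p = int n"
        using su[of "int n" p] fs[OF that(2)] npos by auto
      also have "\<dots> \<longleftrightarrow> s = S.dl p" using True S.sig_in[OF that(2)] unfolding S.dl_def by auto
      finally show ?thesis .
    next
      case False
      hence s1: "s - 1 \<in> idx n" using that by auto
      have "fbar n (fdown f) s = p \<longleftrightarrow> \<sigma> p = s - 1"
        using fd su[OF s1, of p] fs[OF that(2)] by auto
      also have "\<dots> \<longleftrightarrow> s = S.dl p" using False that S.sig_in[OF that(2)] unfolding S.dl_def by auto
      finally show ?thesis .
    qed
  qed
  have Dchar: "(p, q) \<in> hook_graph n (fdown f) \<longleftrightarrow> p \<in> idx n \<and> q \<in> idx n \<and> p \<noteq> q \<and>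
       ilv (S.Rf (S.dl p)) (S.Rf p) (S.Rf (S.dl q)) (S.Rf q)" for p q
  proof
    assume "(p, q) \<in> hook_graph n (fdown f)"
    then obtain s t where h: "p \<in> idx n" "q \<in> idx n" "p \<noteq> q" "s \<in> idx n" "t \<in> idx n"
      "fbar n (fdown f) s = p" "fbar n (fdown f) t = q"
      "closed_segment (bpt n s) (bpt n p) \<inter> closed_segment (bpt n t) (bpt n q) \<noteq> {}"
      unfolding hook_graph_def by blast
    have "s = S.dl p" "t = S.dl q" using fdu h by auto
    thus "p \<in> idx n \<and> q \<in> idx n \<and> p \<noteq> q \<and> ilv (S.Rf (S.dl p)) (S.Rf p) (S.Rf (S.dl q)) (S.Rf q)"
      using h S.geoD0[OF h(1,2)] by auto
  next
    assume h: "p \<in> idx n \<and> q \<in> idx n \<and> p \<noteq> q \<and> ilv (S.Rf (S.dl p)) (S.Rf p) (S.Rf (S.dl q)) (S.Rf q)"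
    have "fbar n (fdown f) (S.dl p) = p" "fbar n (fdown f) (S.dl q) = q"
      using fdu S.dl_in h by auto
    thus "(p, q) \<in> hook_graph n (fdown f)" unfolding hook_graph_def
      using h S.geoD0[of p q] S.dl_in[of p] S.dl_in[of q] by blast
  qed
  have CH: "S.Cg \<subseteq> hook_graph n f" unfolding S.Cg_def using Hchar S.H_fwd by auto
  have CD: "S.Cg \<subseteq> hook_graph n (fdown f)" unfolding S.Cg_def using Dchar S.D_fwd by auto
  have HC: "hook_graph n f \<subseteq> {(a,b). a \<in> idx n \<and> b \<in> idx n \<and> a \<noteq> b \<and> (S.cr a b \<or> S.Ht a b)}"
    using Hchar S.H_bwd by auto
  have DC: "hook_graph n (fdown f) \<subseteq> {(a,b). a \<in> idx n \<and> b \<in> idx n \<and> a \<noteq> b \<and> (S.cr a b \<or> S.Dt a b)}"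
    using Dchar S.D_bwd by auto
  have ii: "\<forall>p\<in>idx n. \<forall>q\<in>idx n.
            (p, q) \<in> (crossing_graph n f)\<^sup>* \<longleftrightarrow>
            (p, q) \<in> (hook_graph n f)\<^sup>* \<and> (p, q) \<in> (hook_graph n (fdown f))\<^sup>*"
  proof (intro ballI iffI)
    fix p q assume "p \<in> idx n" "q \<in> idx n" "(p, q) \<in> (crossing_graph n f)\<^sup>*"
    thus "(p, q) \<in> (hook_graph n f)\<^sup>* \<and> (p, q) \<in> (hook_graph n (fdown f))\<^sup>*"
      unfolding Cchar using rtrancl_mono[OF CH] rtrancl_mono[OF CD] by auto
  next
    fix p q assume "p \<in> idx n" "q \<in> idx n" "(p, q) \<in> (hook_graph n f)\<^sup>* \<and> (p, q) \<in> (hook_graph n (fdown f))\<^sup>*"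
    thus "(p, q) \<in> (crossing_graph n f)\<^sup>*"
      unfolding Cchar using S.core_thm[OF _ HC DC] by blast
  qed
  have i: "graph_connected n (crossing_graph n f) \<longleftrightarrow>
            graph_connected n (hook_graph n f) \<and> graph_connected n (hook_graph n (fdown f))"
    unfolding graph_connected_def using ii by blast
  show ?thesis using i ii by blast
qed


end
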